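(* Let $\mathcal{M}=(E,\mathcal{I})$ be a loopless matroid with $n=|E|$ elements and rank $r\geq 1$ that is uniformly dense. Let $1\leq j\leq n$ and let $(x_1,\dots,x_j)$ be a sequence of $j$ distinct elements of $E$ chosen uniformly at random among all such sequences. Then the probability that $x_j$ is selected by the greedy procedure run on the sequence $(x_1,\dots,x_j)$ is at least $1-(j-1)/r$.
   Context: For a loopless matroid $\mathcal{M}=(E,\mathcal{I})$ with rank function $r(\cdot)$, its density is $\gamma(\mathcal{M})=\max_{\emptyset\neq X\subseteq E}|X|/r(X)$. The matroid is uniformly dense if $|X|/r(X)\leq |E|/r(E)$ for every non-empty $X\subseteq E$. The greedy procedure on a sequence of elements processes them in order and selects an element if and only if it can be added to the previously selected elements while keeping the selected set independent. *)

theory Defs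
  imports Complex_Main
begin

definition matroid :: "'a set \<Rightarrow> ('a set \<Rightarrow> bool) \<Rightarrow> bool" where
  "matroid E indep \<longleftrightarrow>
     finite E \<and>
     (\<forall>X. indep X \<longrightarrow> X \<subseteq> E) \<and>
     indep {} \<and>
     (\<forall>X Y. indep X \<and> Y \<subseteq> X \<longrightarrow> indep Y) \<and>
     (\<forall>X Y. indep X \<and> indep Y \<and> card X < card Y \<longrightarrow>
        (\<exists>y \<in> Y - X. indep (insert y X)))"

definition mrank :: "('a set \<Rightarrow> bool) \<Rightarrow> 'a set \<Rightarrow> nat" where
  "mrank indep X = Max {card Y | Y. Y \<subseteq> X \<and> indep Y}"

definition loopless :: "'a set \<Rightarrow> ('a set \<Rightarrow> bool) \<Rightarrow> bool" where
  "loopless E indep \<longleftrightarrow> (\<forall>e \<in> E. indep {e})"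

definition uniformly_dense :: "'a set \<Rightarrow> ('a set \<Rightarrow> bool) \<Rightarrow> bool" where
  "uniformly_dense E indep \<longleftrightarrow>
     (\<forall>X. X \<subseteq> E \<and> X \<noteq> {} \<longrightarrow>
        real (card X) / real (mrank indep X) \<le> real (card E) / real (mrank indep E))"

definition greedy :: "('a set \<Rightarrow> bool) \<Rightarrow> 'a list \<Rightarrow> 'a set" where
  "greedy indep xs =
     foldl (\<lambda>S x. if indep (insert x S) then insert x S else S) {} xs"

definition last_selected :: "('a set \<Rightarrow> bool) \<Rightarrow> 'a list \<Rightarrow> bool" where
  "last_selected indep xs \<longleftrightarrow> indep (insert (last xs) (greedy indep (butlast xs)))"

definition dseqs :: "'a set \<Rightarrow> nat \<Rightarrow> 'a list set" where
  "dseqs E j = {xs. set xs \<subseteq> E \<and> distinct xs \<and> length xs = j}"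

end

theory Submission
  imports Defs
begin

lemma foldl_indep:
  assumes "indep S"
  shows "indep (foldl (\<lambda>S x. if indep (insert x S) then insert x S else S) S xs)"
  using assms by (induction xs arbitrary: S) auto

lemma foldl_sub:
  "foldl (\<lambda>S x. if indep (insert x S) then insert x S else S) S xs \<subseteq> S \<union> set xs"
proof (induction xs arbitrary: S)
  case Nil then show ?case by simp
next
  case (Cons a xs)
  let ?f = "\<lambda>S x. if indep (insert x S) then insert x S else S"
  have "foldl ?f (?f S a) xs \<subseteq> ?f S a \<union> set xs" by (rule Cons.IH)
  moreover have "?f S a \<subseteq> insert a S" by auto
  ultimately show ?case by auto
qed

lemma foldl_sup:
  "S \<subseteq> foldl (\<lambda>S x. if indep (insert x S) then insert x S else S) S xs"
proof (induction xs arbitrary: S)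
  case Nil then show ?case by simp
next
  case (Cons a xs)
  let ?f = "\<lambda>S x. if indep (insert x S) then insert x S else S"
  have "?f S a \<subseteq> foldl ?f (?f S a) xs" by (rule Cons.IH)
  moreover have "S \<subseteq> ?f S a" by auto
  ultimately show ?case by auto
qed

lemma foldl_max:
  assumes her: "\<forall>X Y. indep X \<and> Y \<subseteq> X \<longrightarrow> indep Y"
    and "x \<in> set xs"
  shows "x \<in> foldl (\<lambda>S x. if indep (insert x S) then insert x S else S) S xs \<or>
    \<not> indep (insert x (foldl (\<lambda>S x. if indep (insert x S) then insert x S else S) S xs))"
  using assms(2)
proof (induction xs arbitrary: S)
  case Nil
  then show ?case by simp
next
  case (Cons a xs)
  let ?f = "\<lambda>S x. if indep (insert x S) then insert x S else S"
  show ?case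
  proof (cases "x \<in> set xs")
    case True
    then show ?thesis using Cons.IH[of "?f S a"] by simp
  next
    case False
    then have xa: "x = a" using Cons.prems by simp
    show ?thesis
    proof (cases "indep (insert a S)")
      case True
      then show ?thesis using foldl_sup[of "insert a S" indep xs] xa by auto
    next
      case False
      have "insert a S \<subseteq> insert a (foldl ?f S xs)" using foldl_sup[of S indep xs] by auto
      moreover have "\<not> indep (insert a S)" using False .
      ultimately have "\<not> indep (insert a (foldl ?f S xs))" using her by blast
      then show ?thesis using xa False by simp
    qed
  qed
qed

lemma mrank_closure:
  assumes m: "matroid E indep" and iG: "indep G" and GD: "G \<subseteq> D" and DE: "D \<subseteq> E"
    and cl: "\<forall>e\<in>D - G. \<not> indep (insert e G)"
  shows "mrank indep D = card G"
  unfolding mrank_def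
proof (rule Max_eqI)
  have fE: "finite E" using m unfolding matroid_def by simp
  have fD: "finite D" using fE DE by (rule finite_subset[rotated])
  have "{card Y |Y. Y \<subseteq> D \<and> indep Y} \<subseteq> card ` Pow D" by auto
  moreover have "finite (card ` Pow D)" using fD by simp
  ultimately show "finite {card Y |Y. Y \<subseteq> D \<and> indep Y}" by (rule finite_subset)
next
  have aug: "\<forall>X Y. indep X \<and> indep Y \<and> card X < card Y \<longrightarrow>
        (\<exists>y \<in> Y - X. indep (insert y X))" using m unfolding matroid_def by simp
  fix y assume "y \<in> {card Y |Y. Y \<subseteq> D \<and> indep Y}"
  then obtain Y where Y: "y = card Y" "Y \<subseteq> D" "indep Y" by auto
  show "y \<le> card G"
  proof (rule ccontr)
    assume "\<not> y \<le> card G"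
    then have "card G < card Y" using Y by simp
    then obtain z where z: "z \<in> Y - G" "indep (insert z G)"
      using aug iG Y(3) by blast
    then have "z \<in> D - G" using Y(2) by blast
    then show False using cl z(2) by blast
  qed
next
  show "card G \<in> {card Y |Y. Y \<subseteq> D \<and> indep Y}" using iG GD by auto
qed

lemma bad_bound:
  assumes m: "matroid E indep" and ll: "loopless E indep" and r1: "mrank indep E \<ge> 1"
    and ud: "uniformly_dense E indep" and ys: "ys \<in> dseqs E k"
  shows "real (card {e \<in> E - set ys. \<not> indep (insert e (greedy indep ys))})
      \<le> real (card E) * real k / real (mrank indep E) - real k"
proof (cases "k = 0")
  case True
  then have "ys = []" using ys unfolding dseqs_def by auto
  then have "{e \<in> E - set ys. \<not> indep (insert e (greedy indep ys))} = {}"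
    using ll unfolding loopless_def greedy_def by auto
  then have c0: "card {e \<in> E - set ys. \<not> indep (insert e (greedy indep ys))} = 0" by (metis card.empty)
  show ?thesis unfolding c0 using True by simp
next
  case False
  define G where "G = greedy indep ys"
  define D where "D = {e\<in>E. e \<in> G \<or> \<not> indep (insert e G)}"
  define bad where "bad = {e \<in> E - set ys. \<not> indep (insert e G)}"
  have fE: "finite E" and i0: "indep {}" and her: "\<forall>X Y. indep X \<and> Y \<subseteq> X \<longrightarrow> indep Y"
    using m unfolding matroid_def by auto
  have ysE: "set ys \<subseteq> E" and dys: "distinct ys" and lys: "length ys = k"
    using ys unfolding dseqs_def by auto
  have cys: "card (set ys) = k" using dys lys distinct_card by blast
  have iG: "indep G" unfolding G_def greedy_def by (rule foldl_indep[of indep, OF i0])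
  have Gys: "G \<subseteq> set ys" unfolding G_def greedy_def using foldl_sub[of indep "{}" ys] by simp
  have cG: "card G \<le> k" using Gys cys card_mono by fastforce
  have ysD: "set ys \<subseteq> D"
  proof
    fix x assume x: "x \<in> set ys"
    then have "x \<in> G \<or> \<not> indep (insert x G)"
      unfolding G_def greedy_def using foldl_max[OF her x] by blast
    then show "x \<in> D" using x ysE unfolding D_def by auto
  qed
  have GD: "G \<subseteq> D" using Gys ysD by auto
  have DE: "D \<subseteq> E" unfolding D_def by auto
  have finD: "finite D" using DE fE finite_subset by blast
  have rD: "mrank indep D = card G"
    by (rule mrank_closure[OF m iG GD DE]) (auto simp: D_def)
  have Gne: "G \<noteq> {}"
  proof
    assume G0: "G = {}"
    from False lys obtain x where x: "x \<in> set ys" by (cases ys) auto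
    then have "x \<in> D" using ysD by auto
    then show False using G0 ll x ysE unfolding D_def loopless_def by auto
  qed
  have fG: "finite G" using Gys by (rule finite_subset) simp
  then have cGpos: "card G > 0" using Gne by (simp add: card_gt_0_iff)
  have Dne: "D \<noteq> {}" using GD Gne by auto
  have "real (card D) / real (card G) \<le> real (card E) / real (mrank indep E)"
  proof -
    have "\<forall>X. X \<subseteq> E \<and> X \<noteq> {} \<longrightarrow>
        real (card X) / real (mrank indep X) \<le> real (card E) / real (mrank indep E)"
      using ud unfolding uniformly_dense_def by simp
    then have "real (card D) / real (mrank indep D) \<le> real (card E) / real (mrank indep E)"
      using DE Dne by blast
    then show ?thesis using rD by simp
  qed
  then have "real (card D) \<le> real (card E) / real (mrank indep E) * real (card G)"
    using cGpos by (simp add: divide_le_eq)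
  also have "\<dots> \<le> real (card E) / real (mrank indep E) * real k"
    using cG by (intro mult_left_mono) auto
  finally have cD: "real (card D) \<le> real (card E) * real k / real (mrank indep E)" by simp
  have "bad \<subseteq> D" "bad \<inter> set ys = {}" unfolding bad_def D_def by auto
  then have "card bad + card (set ys) \<le> card D"
  proof -
    assume a: "bad \<subseteq> D" "bad \<inter> set ys = {}"
    have fb: "finite bad" using a(1) finD by (rule finite_subset)
    have "card (bad \<union> set ys) = card bad + card (set ys)"
      using card_Un_disjoint[OF fb _ a(2)] by simp
    moreover have "card (bad \<union> set ys) \<le> card D"
      using a(1) ysD finD by (intro card_mono) auto
    ultimately show ?thesis by simp
  qed
  then have "real (card bad) + real k \<le> real (card D)" using cys by linarith
  then show ?thesis using cD unfolding bad_def G_def by linarith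
qed

lemma split_count:
  assumes fE: "finite E"
  shows "card {xs \<in> dseqs E (Suc k). P xs} = (\<Sum>ys\<in>dseqs E k. card {e \<in> E - set ys. P (ys @ [e])})"
proof -
  have fd: "finite (dseqs E k)"
    using finite_lists_length_eq[OF fE, of k] unfolding dseqs_def
    by (rule finite_subset[rotated]) auto
  have eq: "{xs \<in> dseqs E (Suc k). P xs} =
      (\<lambda>(ys,e). ys @ [e]) ` (SIGMA ys:dseqs E k. {e \<in> E - set ys. P (ys @ [e])})"
  proof
    show "{xs \<in> dseqs E (Suc k). P xs} \<subseteq>
      (\<lambda>(ys,e). ys @ [e]) ` (SIGMA ys:dseqs E k. {e \<in> E - set ys. P (ys @ [e])})"
    proof
      fix xs assume xs: "xs \<in> {xs \<in> dseqs E (Suc k). P xs}"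
      then have ne: "xs \<noteq> []" unfolding dseqs_def by auto
      then have xe: "xs = butlast xs @ [last xs]" by simp
      have d: "distinct (butlast xs @ [last xs])" "set (butlast xs @ [last xs]) \<subseteq> E"
        "length (butlast xs @ [last xs]) = Suc k" "P (butlast xs @ [last xs])"
        using xs xe unfolding dseqs_def by (metis (mono_tags, lifting) mem_Collect_eq)+
      have "(butlast xs, last xs) \<in> (SIGMA ys:dseqs E k. {e \<in> E - set ys. P (ys @ [e])})"
        using d unfolding dseqs_def by auto
      then show "xs \<in> (\<lambda>(ys,e). ys @ [e]) ` (SIGMA ys:dseqs E k. {e \<in> E - set ys. P (ys @ [e])})"
        using xe by (metis (no_types, lifting) case_prod_conv image_eqI)
    qed
  next
    show "(\<lambda>(ys,e). ys @ [e]) ` (SIGMA ys:dseqs E k. {e \<in> E - set ys. P (ys @ [e])})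
      \<subseteq> {xs \<in> dseqs E (Suc k). P xs}"
      unfolding dseqs_def by auto
  qed
  have inj: "inj_on (\<lambda>(ys,e). ys @ [e]) (SIGMA ys:dseqs E k. {e \<in> E - set ys. P (ys @ [e])})"
    by (auto simp: inj_on_def)
  show ?thesis unfolding eq card_image[OF inj]
    by (rule card_SigmaI) (use fd fE in auto)
qed

theorem lemma1:
  fixes E :: "'a set" and indep :: "'a set \<Rightarrow> bool" and j :: nat
  assumes "matroid E indep"
    and "loopless E indep"
    and "mrank indep E \<ge> 1"
    and "uniformly_dense E indep"
    and "1 \<le> j" and "j \<le> card E"
  shows "real (card {xs \<in> dseqs E j. last_selected indep xs}) / real (card (dseqs E j))
           \<ge> 1 - (real j - 1) / real (mrank indep E)"
proof -
  obtain k where jk: "j = Suc k" using assms(5) by (cases j) auto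
  define n where "n = card E"
  define r where "r = mrank indep E"
  have fE: "finite E" using assms(1) unfolding matroid_def by auto
  have rpos: "real r > 0" using assms(3) unfolding r_def by simp
  have kn: "k < n" using assms(6) jk n_def by simp
  have fd: "finite (dseqs E k)"
    using finite_lists_length_eq[OF fE, of k] unfolding dseqs_def
    by (rule finite_subset[rotated]) auto
  obtain zs where zs: "set zs = E" "distinct zs" using finite_distinct_list[OF fE] by blast
  have "take k zs \<in> dseqs E k" using zs kn n_def distinct_card[OF zs(2)]
    unfolding dseqs_def by (auto dest: in_set_takeD)
  then have Npos: "card (dseqs E k) > 0" using fd card_gt_0_iff by blast
  define N where "N = card (dseqs E k)"
  have ce: "\<And>ys. ys \<in> dseqs E k \<Longrightarrow> card (E - set ys) = n - k"
    unfolding dseqs_def n_def using fE by (auto simp: card_Diff_subset distinct_card)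
  have s1: "card {xs \<in> dseqs E (Suc k). True} = (\<Sum>ys\<in>dseqs E k. card {e \<in> E - set ys. True})"
    by (rule split_count[OF fE])
  have s2: "(\<Sum>ys\<in>dseqs E k. card {e \<in> E - set ys. True}) = (\<Sum>ys\<in>dseqs E k. n - k)"
  proof (rule sum.cong)
    fix ys assume ys: "ys \<in> dseqs E k"
    have "{e \<in> E - set ys. True} = E - set ys" by blast
    then show "card {e \<in> E - set ys. True} = n - k" using ce[OF ys] by simp
  qed simp
  have "{xs \<in> dseqs E (Suc k). True} = dseqs E j" using jk by blast
  then have tot: "card (dseqs E j) = N * (n - k)"
    using s1 s2 unfolding N_def by simp
  have badeq: "card {xs \<in> dseqs E j. \<not> last_selected indep xs} =
     (\<Sum>ys\<in>dseqs E k. card {e \<in> E - set ys. \<not> indep (insert e (greedy indep ys))})"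
    using split_count[OF fE, of k "\<lambda>xs. \<not> last_selected indep xs"] unfolding jk
    by (simp add: last_selected_def)
  define B where "B = real n * real k / real r - real k"
  have "real (card {xs \<in> dseqs E j. \<not> last_selected indep xs}) \<le> (\<Sum>ys\<in>dseqs E k. B)"
    unfolding badeq of_nat_sum
    by (rule sum_mono) (use bad_bound[OF assms(1-4)] in \<open>auto simp: B_def n_def r_def\<close>)
  then have bad: "real (card {xs \<in> dseqs E j. \<not> last_selected indep xs}) \<le> real N * B"
    by (simp add: N_def)
  have fdj: "finite (dseqs E j)"
    using finite_lists_length_eq[OF fE, of j] unfolding dseqs_def
    by (rule finite_subset[rotated]) auto
  have part: "card {xs \<in> dseqs E j. last_selected indep xs} + card {xs \<in> dseqs E j. \<not> last_selected indep xs}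
     = card (dseqs E j)"
  proof -
    let ?A = "{xs \<in> dseqs E j. last_selected indep xs}"
    let ?B = "{xs \<in> dseqs E j. \<not> last_selected indep xs}"
    have fa: "finite ?A" using fdj by (rule finite_subset[rotated]) blast
    have fb: "finite ?B" using fdj by (rule finite_subset[rotated]) blast
    have "?A \<inter> ?B = {}" by blast
    then have "card (?A \<union> ?B) = card ?A + card ?B" by (rule card_Un_disjoint[OF fa fb])
    moreover have "?A \<union> ?B = dseqs E j" by blast
    ultimately show ?thesis by simp
  qed
  define T where "T = real N * (real n - real k)"
  have Tpos: "T > 0" unfolding T_def using Npos kn N_def by simp
  have Teq: "real (card (dseqs E j)) = T" unfolding tot T_def using kn by (simp add: of_nat_diff)
  define g where "g = real (card {xs \<in> dseqs E j. last_selected indep xs})"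
  have gT: "g \<ge> T - real N * B"
  proof -
    have "g + real (card {xs \<in> dseqs E j. \<not> last_selected indep xs}) = T"
      using part Teq unfolding g_def by (metis of_nat_add)
    then show ?thesis using bad by linarith
  qed
  show ?thesis
  proof (cases "k \<le> r")
    case False
    then have "1 - (real j - 1) / real r < 0" using rpos jk by (simp add: field_simps)
    moreover have "real (card {xs \<in> dseqs E j. last_selected indep xs}) / real (card (dseqs E j)) \<ge> 0" by simp
    ultimately show ?thesis unfolding r_def by linarith
  next
    case True
    have "real N * B \<le> T * (real k / real r)"
    proof -
      have "real k * (real n - real r) \<le> real k * (real n - real k)"
        using True by (intro mult_left_mono) auto
      have "B = real k * (real n - real r) / real r" unfolding B_def using rpos by (simp add: field_simps)
      also have "\<dots> \<le> real k * (real n - real k) / real r"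
        using \<open>real k * (real n - real r) \<le> real k * (real n - real k)\<close> rpos by (intro divide_right_mono) auto
      also have "\<dots> = (real n - real k) * (real k / real r)" by simp
      finally have "B \<le> (real n - real k) * (real k / real r)" .
      then have "real N * B \<le> real N * ((real n - real k) * (real k / real r))"
        by (intro mult_left_mono) auto
      then show ?thesis unfolding T_def by (simp only: mult.assoc)
    qed
    then have "g \<ge> T * (1 - real k / real r)" using gT by (simp add: algebra_simps)
    then have "g / T \<ge> 1 - real k / real r" using Tpos by (simp add: field_simps)
    then show ?thesis using Teq jk unfolding g_def r_def by simp
  qed
qed

end
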